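(* Let $G$ be a biconnected series-parallel graph without transitive edges, let $(s,t)$ be a separation pair of $G$, and let $G'$ be a light component of $G$ with respect to $(s,t)$. Then $G'$ is of one of the following forms: (1) $G'$ is a path $s - w - t$ of length two (a single internal vertex $w$ adjacent to both poles); (2) the internal vertices of $G'$ are a vertex $t'$ and a nonempty independent set $V_s$, where $t'$ is adjacent to $t$, and every vertex of $V_s$ is adjacent to $s$ and to $t'$ (and to no other vertex), $t'$ is not adjacent to $s$, and no vertex of $V_s$ is adjacent to $t$; (3) symmetrically, the internal vertices of $G'$ are a vertex $s'$ adjacent to $s$ and a nonempty independent set $V_t$ of vertices each adjacent to $t$ and $s'$ (and to no other vertex), with $s'$ not adjacent to $t$ and no vertex of $V_t$ adjacent to $s$. In particular, if $G'$ has more than one internal vertex, then the set $V_s$ of internal neighbours of $s$ and the set $V_t$ of internal neighbours of $t$ are disjoint independent sets covering all internal vertices, and $|V_s|=1$ or $|V_t|=1$.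
   Context: A biconnected graph is series-parallel if it contains no subdivision of $K_4$. A separation pair of a biconnected graph $G$ is a pair $(s,t)$ of vertices with $G-s-t$ disconnected; a transitive edge is an edge joining the two vertices of a separation pair. A component w.r.t. $(s,t)$ is the subgraph induced by $s$, $t$ and the vertex set of one connected component of $G-s-t$; $s,t$ are its poles and the other vertices are internal vertices. A component is heavy if it has an internal vertex adjacent to neither $s$ nor $t$, and light otherwise (i.e., every internal vertex is adjacent to $s$ or to $t$). *)

theory Defs
  imports Main
begin

definition graph :: "'a set \<Rightarrow> ('a \<Rightarrow> 'a \<Rightarrow> bool) \<Rightarrow> bool" where
  "graph V E \<longleftrightarrow> finite V \<and> (\<forall>x y. E x y \<longrightarrow> x \<in> V \<and> y \<in> V \<and> x \<noteq> y \<and> E y x)"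

text \<open>The subgraph induced by S is connected (vacuously so if S is empty).\<close>
definition connected_in :: "('a \<Rightarrow> 'a \<Rightarrow> bool) \<Rightarrow> 'a set \<Rightarrow> bool" where
  "connected_in E S \<longleftrightarrow>
     (\<forall>x\<in>S. \<forall>y\<in>S. (\<lambda>u v. E u v \<and> u \<in> S \<and> v \<in> S)\<^sup>*\<^sup>* x y)"

definition biconnected :: "'a set \<Rightarrow> ('a \<Rightarrow> 'a \<Rightarrow> bool) \<Rightarrow> bool" where
  "biconnected V E \<longleftrightarrow> graph V E \<and> card V \<ge> 3 \<and> connected_in E V \<and>
     (\<forall>v\<in>V. connected_in E (V - {v}))"

definition is_path :: "'a set \<Rightarrow> ('a \<Rightarrow> 'a \<Rightarrow> bool) \<Rightarrow> 'a list \<Rightarrow> bool" where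
  "is_path V E p \<longleftrightarrow> distinct p \<and> length p \<ge> 2 \<and> set p \<subseteq> V \<and>
     (\<forall>i. Suc i < length p \<longrightarrow> E (p ! i) (p ! Suc i))"

definition inner_vertices :: "'a list \<Rightarrow> 'a set" where
  "inner_vertices p = set (butlast (tl p))"

definition has_K4_subdivision :: "'a set \<Rightarrow> ('a \<Rightarrow> 'a \<Rightarrow> bool) \<Rightarrow> bool" where
  "has_K4_subdivision V E \<longleftrightarrow>
     (\<exists>(b :: nat \<Rightarrow> 'a) (P :: nat \<Rightarrow> nat \<Rightarrow> 'a list).
        inj_on b {0..<4} \<and> b ` {0..<4} \<subseteq> V \<and>
        (\<forall>i j. i < j \<and> j < 4 \<longrightarrow>
           is_path V E (P i j) \<and> hd (P i j) = b i \<and> last (P i j) = b j \<and>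
           inner_vertices (P i j) \<inter> b ` {0..<4} = {}) \<and>
        (\<forall>i j k l. i < j \<and> j < 4 \<and> k < l \<and> l < 4 \<and> (i, j) \<noteq> (k, l) \<longrightarrow>
           inner_vertices (P i j) \<inter> inner_vertices (P k l) = {}))"

definition series_parallel :: "'a set \<Rightarrow> ('a \<Rightarrow> 'a \<Rightarrow> bool) \<Rightarrow> bool" where
  "series_parallel V E \<longleftrightarrow> biconnected V E \<and> \<not> has_K4_subdivision V E"

definition separation_pair :: "'a set \<Rightarrow> ('a \<Rightarrow> 'a \<Rightarrow> bool) \<Rightarrow> 'a \<Rightarrow> 'a \<Rightarrow> bool" where
  "separation_pair V E s t \<longleftrightarrow> s \<in> V \<and> t \<in> V \<and> s \<noteq> t \<and> \<not> connected_in E (V - {s, t})"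

definition no_transitive_edges :: "'a set \<Rightarrow> ('a \<Rightarrow> 'a \<Rightarrow> bool) \<Rightarrow> bool" where
  "no_transitive_edges V E \<longleftrightarrow> (\<forall>s t. separation_pair V E s t \<longrightarrow> \<not> E s t)"

definition conn_component :: "('a \<Rightarrow> 'a \<Rightarrow> bool) \<Rightarrow> 'a set \<Rightarrow> 'a set \<Rightarrow> bool" where
  "conn_component E S C \<longleftrightarrow> C \<noteq> {} \<and> C \<subseteq> S \<and> connected_in E C \<and>
     (\<forall>D. C \<subseteq> D \<and> D \<subseteq> S \<and> connected_in E D \<longrightarrow> D = C)"

text \<open>The component w.r.t. (s,t) is the subgraph induced by C \<union> {s,t}, where C is
a connected component of G - s - t; C is its set of internal vertices.\<close>
definition light_component ::
  "'a set \<Rightarrow> ('a \<Rightarrow> 'a \<Rightarrow> bool) \<Rightarrow> 'a \<Rightarrow> 'a \<Rightarrow> 'a set \<Rightarrow> bool" where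
  "light_component V E s t C \<longleftrightarrow> conn_component E (V - {s, t}) C \<and>
     (\<forall>w\<in>C. E s w \<or> E t w)"

definition independent :: "('a \<Rightarrow> 'a \<Rightarrow> bool) \<Rightarrow> 'a set \<Rightarrow> bool" where
  "independent E S \<longleftrightarrow> (\<forall>x\<in>S. \<forall>y\<in>S. \<not> E x y)"

end

theory Submission
  imports Defs
begin


definition wk :: "('a \<Rightarrow> 'a \<Rightarrow> bool) \<Rightarrow> 'a set \<Rightarrow> 'a \<Rightarrow> 'a \<Rightarrow> bool" where
  "wk E T a b = (\<lambda>u v. E u v \<and> u \<in> T \<and> v \<in> T)\<^sup>*\<^sup>* a b"

lemma wk_refl[simp]: "wk E T a a" unfolding wk_def by simp

lemma wk_edge: "E a b \<Longrightarrow> a \<in> T \<Longrightarrow> b \<in> T \<Longrightarrow> wk E T a b"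
  unfolding wk_def by (simp add: r_into_rtranclp)

lemma wk_trans: "wk E T a b \<Longrightarrow> wk E T b c \<Longrightarrow> wk E T a c"
  unfolding wk_def by (rule rtranclp_trans)

lemma wk_mono: "wk E T a b \<Longrightarrow> T \<subseteq> T' \<Longrightarrow> wk E T' a b"
  unfolding wk_def by (erule rtranclp_mono[THEN predicate2D, rotated]) auto

lemma wk_sym:
  assumes "\<And>x y. E x y \<Longrightarrow> E y x" "wk E T a b" shows "wk E T b a"
  using assms(2) unfolding wk_def
proof (induction rule: rtranclp_induct)
  case base then show ?case by simp
next
  case (step y z)
  then show ?case using assms(1)
    by (metis (mono_tags, lifting) converse_rtranclp_into_rtranclp)
qed

lemma wk_closed:
  assumes "wk E T a b" "a \<in> X" "\<forall>u\<in>X. \<forall>v\<in>T. E u v \<longrightarrow> v \<in> X"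
  shows "b \<in> X"
  using assms(1) unfolding wk_def
proof (induction rule: rtranclp_induct)
  case base then show ?case using assms(2) by simp
next
  case (step y z) then show ?case using assms(3) by blast
qed

lemma wk_in: "wk E T a b \<Longrightarrow> a \<in> T \<Longrightarrow> b \<in> T"
  unfolding wk_def by (induction rule: rtranclp_induct) auto

lemma wk_sub:
  assumes "wk E T a b" "\<And>v. wk E T a v \<Longrightarrow> v \<in> Q"
  shows "wk E Q a b"
  using assms(1)
proof (induction rule: rtranclp_induct[of _ a b, OF assms(1)[unfolded wk_def]])
  case 1 then show ?case by simp
next
  case (2 y z)
  have y: "wk E T a y" using 2(1) unfolding wk_def .
  have "wk E T a z" using wk_trans[OF y wk_edge] 2(2) by auto
  then have "y \<in> Q" "z \<in> Q" using assms(2) y by auto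
  moreover have "wk E Q a y" using 2(3) \<open>wk E T a y\<close> by simp
  ultimately show ?case using 2(2) wk_trans wk_edge by metis
qed

lemma wk_reach:
  assumes "wk E T a b"
  shows "wk E {v. wk E T a v} a b"
  using wk_sub[OF assms] by blast

lemma connected_in_wk: "connected_in E S = (\<forall>x\<in>S. \<forall>y\<in>S. wk E S x y)"
  unfolding connected_in_def wk_def by simp

lemma wk_path:
  assumes "wk E T a b"
  shows "\<exists>p. p \<noteq> [] \<and> hd p = a \<and> last p = b \<and> distinct p \<and> set p \<subseteq> insert b T \<and>
     (\<forall>i. Suc i < length p \<longrightarrow> E (p!i) (p!Suc i))"
  using assms unfolding wk_def
proof (induction rule: converse_rtranclp_induct)
  case base show ?case by (intro exI[of _ "[b]"]) auto
next
  case (step a x)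
  then have ax: "E a x" "a \<in> T" "x \<in> T" by auto
  from step obtain p where p: "p \<noteq> []" "hd p = x" "last p = b" "distinct p" "set p \<subseteq> insert b T"
     "\<forall>i. Suc i < length p \<longrightarrow> E (p!i) (p!Suc i)" by blast
  show ?case
  proof (cases "a \<in> set p")
    case True
    then obtain ys zs where yz: "p = ys @ a # zs" by (meson split_list)
    let ?q = "a # zs"
    show ?thesis
    proof (intro exI[of _ ?q] conjI)
      show "?q \<noteq> []" by simp
      show "hd ?q = a" by simp
      show "last ?q = b" using p(3) yz by simp
      show "distinct ?q" using p(4) yz by simp
      show "set ?q \<subseteq> insert b T" using p(5) yz by auto
      show "\<forall>i. Suc i < length ?q \<longrightarrow> E (?q!i) (?q!Suc i)"
      proof (intro allI impI)
        fix i assume "Suc i < length ?q"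
        then have "Suc (length ys + i) < length p" using yz by simp
        then have "E (p!(length ys + i)) (p!Suc (length ys + i))" using p(6) by blast
        then show "E (?q!i) (?q!Suc i)" using yz by (simp add: nth_append)
      qed
    qed
  next
    case False
    let ?q = "a # p"
    show ?thesis
    proof (intro exI[of _ ?q] conjI)
      show "?q \<noteq> []" by simp
      show "hd ?q = a" by simp
      show "last ?q = b" using p(1,3) by simp
      show "distinct ?q" using p(4) False by simp
      show "set ?q \<subseteq> insert b T" using p(5) ax by auto
      show "\<forall>i. Suc i < length ?q \<longrightarrow> E (?q!i) (?q!Suc i)"
      proof (intro allI impI)
        fix i assume i: "Suc i < length ?q"
        show "E (?q!i) (?q!Suc i)"
        proof (cases i)
          case 0 then show ?thesis using p(1,2) ax by (simp add: hd_conv_nth)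
        next
          case (Suc k) then show ?thesis using i p(6) by simp
        qed
      qed
    qed
  qed
qed

lemma inner_sub:
  assumes "distinct p" "p \<noteq> []"
  shows "inner_vertices p \<subseteq> set p - {hd p, last p}"
proof -
  obtain a q where pq: "p = a # q" using assms(2) by (cases p) auto
  show ?thesis
  proof (cases "q = []")
    case True then show ?thesis using pq by (simp add: inner_vertices_def)
  next
    case False
    then obtain r z where "q = r @ [z]" by (metis rev_exhaust)
    then show ?thesis using pq assms(1) by (auto simp: inner_vertices_def)
  qed
qed

lemma path_of_wk:
  assumes g: "graph V E" and w: "wk E T a b" and ab: "a \<noteq> b"
  shows "\<exists>p. is_path V E p \<and> hd p = a \<and> last p = b \<and> inner_vertices p \<subseteq> T - {a, b}"
proof -
  obtain p where p: "p \<noteq> []" "hd p = a" "last p = b" "distinct p" "set p \<subseteq> insert b T"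
     "\<forall>i. Suc i < length p \<longrightarrow> E (p!i) (p!Suc i)" using wk_path[OF w] by blast
  have len: "length p \<ge> 2"
  proof (rule ccontr)
    assume "\<not> 2 \<le> length p"
    moreover have "length p \<noteq> 0" using p(1) by simp
    ultimately have "length p = 1" by arith
    then have "hd p = last p" by (cases p) auto
    then show False using p ab by simp
  qed
  have EV: "\<And>x y. E x y \<Longrightarrow> x \<in> V \<and> y \<in> V" using g unfolding graph_def by blast
  have "set p \<subseteq> V"
  proof
    fix x assume "x \<in> set p"
    then obtain k where k: "k < length p" "p!k = x" by (auto simp: in_set_conv_nth)
    show "x \<in> V"
    proof (cases "Suc k < length p")
      case True then show ?thesis using p(6) EV k by blast
    next
      case False
      then have "Suc (k - 1) < length p" "Suc (k - 1) = k" using k len by auto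
      then show ?thesis using p(6) EV k by metis
    qed
  qed
  then have "is_path V E p" using p len unfolding is_path_def by blast
  moreover have "inner_vertices p \<subseteq> T - {a, b}" using inner_sub[OF p(4) p(1)] p by auto
  ultimately show ?thesis using p by blast
qed

lemma pairs4: "i < j \<Longrightarrow> j < (4::nat) \<Longrightarrow>
  (i=0\<and>j=1) \<or> (i=0\<and>j=2) \<or> (i=0\<and>j=3) \<or> (i=1\<and>j=2) \<or> (i=1\<and>j=3) \<or> (i=2\<and>j=3)"
  by arith

lemma K4I:
  assumes g: "graph V E" and d: "distinct [b0,b1,b2,b3]"
  and w01: "wk E T01 b0 b1" and w02: "wk E T02 b0 b2" and w03: "wk E T03 b0 b3"
  and w12: "wk E T12 b1 b2" and w13: "wk E T13 b1 b3" and w23: "wk E T23 b2 b3"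
  and i01: "(T01 - {b0,b1}) \<inter> {b2,b3} = {}" and i02: "(T02 - {b0,b2}) \<inter> {b1,b3} = {}"
  and i03: "(T03 - {b0,b3}) \<inter> {b1,b2} = {}" and i12: "(T12 - {b1,b2}) \<inter> {b0,b3} = {}"
  and i13: "(T13 - {b1,b3}) \<inter> {b0,b2} = {}" and i23: "(T23 - {b2,b3}) \<inter> {b0,b1} = {}"
  and x1: "(T01 - {b0,b1}) \<inter> (T02 - {b0,b2}) = {}"
  and x2: "(T01 - {b0,b1}) \<inter> (T03 - {b0,b3}) = {}"
  and x3: "(T01 - {b0,b1}) \<inter> (T12 - {b1,b2}) = {}"
  and x4: "(T01 - {b0,b1}) \<inter> (T13 - {b1,b3}) = {}"
  and x5: "(T01 - {b0,b1}) \<inter> (T23 - {b2,b3}) = {}"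
  and x6: "(T02 - {b0,b2}) \<inter> (T03 - {b0,b3}) = {}"
  and x7: "(T02 - {b0,b2}) \<inter> (T12 - {b1,b2}) = {}"
  and x8: "(T02 - {b0,b2}) \<inter> (T13 - {b1,b3}) = {}"
  and x9: "(T02 - {b0,b2}) \<inter> (T23 - {b2,b3}) = {}"
  and x10: "(T03 - {b0,b3}) \<inter> (T12 - {b1,b2}) = {}"
  and x11: "(T03 - {b0,b3}) \<inter> (T13 - {b1,b3}) = {}"
  and x12: "(T03 - {b0,b3}) \<inter> (T23 - {b2,b3}) = {}"
  and x13: "(T12 - {b1,b2}) \<inter> (T13 - {b1,b3}) = {}"
  and x14: "(T12 - {b1,b2}) \<inter> (T23 - {b2,b3}) = {}"
  and x15: "(T13 - {b1,b3}) \<inter> (T23 - {b2,b3}) = {}"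
  shows "has_K4_subdivision V E"
proof -
  have EV: "\<And>x y. E x y \<Longrightarrow> x \<in> V" using g unfolding graph_def by blast
  have bV: "b0 \<in> V" "b1 \<in> V" "b2 \<in> V" "b3 \<in> V"
  proof -
    obtain p where "is_path V E p" "hd p = b0" using path_of_wk[OF g w01] d by auto
    then show "b0 \<in> V" unfolding is_path_def by (metis hd_in_set list.size(3) not_numeral_le_zero subset_code(1))
  next
    obtain p where "is_path V E p" "hd p = b1" using path_of_wk[OF g w12] d by auto
    then show "b1 \<in> V" unfolding is_path_def by (metis hd_in_set list.size(3) not_numeral_le_zero subset_code(1))
  next
    obtain p where "is_path V E p" "hd p = b2" using path_of_wk[OF g w23] d by auto
    then show "b2 \<in> V" unfolding is_path_def by (metis hd_in_set list.size(3) not_numeral_le_zero subset_code(1))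
  next
    obtain p where "is_path V E p" "last p = b3" using path_of_wk[OF g w23] d by auto
    then show "b3 \<in> V" unfolding is_path_def by (metis last_in_set list.size(3) not_numeral_le_zero subset_code(1))
  qed
  obtain p01 where p01: "is_path V E p01" "hd p01 = b0" "last p01 = b1" "inner_vertices p01 \<subseteq> T01 - {b0,b1}"
    using path_of_wk[OF g w01] d by auto
  obtain p02 where p02: "is_path V E p02" "hd p02 = b0" "last p02 = b2" "inner_vertices p02 \<subseteq> T02 - {b0,b2}"
    using path_of_wk[OF g w02] d by auto
  obtain p03 where p03: "is_path V E p03" "hd p03 = b0" "last p03 = b3" "inner_vertices p03 \<subseteq> T03 - {b0,b3}"
    using path_of_wk[OF g w03] d by auto
  obtain p12 where p12: "is_path V E p12" "hd p12 = b1" "last p12 = b2" "inner_vertices p12 \<subseteq> T12 - {b1,b2}"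
    using path_of_wk[OF g w12] d by auto
  obtain p13 where p13: "is_path V E p13" "hd p13 = b1" "last p13 = b3" "inner_vertices p13 \<subseteq> T13 - {b1,b3}"
    using path_of_wk[OF g w13] d by auto
  obtain p23 where p23: "is_path V E p23" "hd p23 = b2" "last p23 = b3" "inner_vertices p23 \<subseteq> T23 - {b2,b3}"
    using path_of_wk[OF g w23] d by auto
  define b where "b = (\<lambda>i::nat. [b0,b1,b2,b3] ! i)"
  define P where "P = (\<lambda>(i::nat) (j::nat). if i=0\<and>j=1 then p01 else if i=0\<and>j=2 then p02 else if i=0\<and>j=3 then p03
      else if i=1\<and>j=2 then p12 else if i=1\<and>j=3 then p13 else p23)"
  define I where "I = (\<lambda>(i::nat) (j::nat). if i=0\<and>j=1 then T01 - {b0,b1} else if i=0\<and>j=2 then T02 - {b0,b2}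
      else if i=0\<and>j=3 then T03 - {b0,b3}
      else if i=1\<and>j=2 then T12 - {b1,b2} else if i=1\<and>j=3 then T13 - {b1,b3} else T23 - {b2,b3})"
  have b4: "b ` {0..<4} = {b0,b1,b2,b3}"
    proof -
    have "{0..<4::nat} = {0,1,2,3}" by auto
    then show ?thesis by (simp add: b_def)
  qed
  have inj: "inj_on b {0..<4}"
  proof (rule inj_onI)
    fix x y assume "x \<in> {0..<(4::nat)}" "y \<in> {0..<4}" "b x = b y"
    then have "x \<in> {0,1,2,3}" "y \<in> {0,1,2,3}" by auto
    then show "x = y" using d \<open>b x = b y\<close> unfolding b_def
      by (elim insertE emptyE; simp)
  qed
  have IP: "\<And>i j. i < j \<Longrightarrow> j < 4 \<Longrightarrow> inner_vertices (P i j) \<subseteq> I i j"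
  proof -
    fix i j :: nat assume "i < j" "j < 4"
    then show "inner_vertices (P i j) \<subseteq> I i j"
      using pairs4[OF \<open>i < j\<close> \<open>j < 4\<close>] p01(4) p02(4) p03(4) p12(4) p13(4) p23(4) unfolding P_def I_def
      by (elim disjE; simp)
  qed
  have path: "\<And>i j. i < j \<Longrightarrow> j < 4 \<Longrightarrow>
      is_path V E (P i j) \<and> hd (P i j) = b i \<and> last (P i j) = b j \<and>
      inner_vertices (P i j) \<inter> b ` {0..<4} = {}"
  proof -
    fix i j :: nat assume ij: "i < j" "j < 4"
    have "I i j \<inter> {b0,b1,b2,b3} = {}"
      using pairs4[OF ij] i01 i02 i03 i12 i13 i23 unfolding I_def by auto
    then have "inner_vertices (P i j) \<inter> b ` {0..<4} = {}" using IP[OF ij] b4 by auto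
    moreover have "is_path V E (P i j) \<and> hd (P i j) = b i \<and> last (P i j) = b j"
      using pairs4[OF ij] p01 p02 p03 p12 p13 p23 unfolding P_def b_def by auto
    ultimately show "?thesis i j" by blast
  qed
  have disj: "\<And>i j k l. i < j \<and> j < 4 \<and> k < l \<and> l < 4 \<and> (i, j) \<noteq> (k, l) \<Longrightarrow>
           I i j \<inter> I k l = {}"
  proof -
    fix i j k l :: nat assume h: "i < j \<and> j < 4 \<and> k < l \<and> l < 4 \<and> (i, j) \<noteq> (k, l)"
    have A: "(i=0\<and>j=1) \<or> (i=0\<and>j=2) \<or> (i=0\<and>j=3) \<or> (i=1\<and>j=2) \<or> (i=1\<and>j=3) \<or> (i=2\<and>j=3)"
      using pairs4 h by blast
    have B: "(k=0\<and>l=1) \<or> (k=0\<and>l=2) \<or> (k=0\<and>l=3) \<or> (k=1\<and>l=2) \<or> (k=1\<and>l=3) \<or> (k=2\<and>l=3)"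
      using pairs4 h by blast
    from A B h show "I i j \<inter> I k l = {}" unfolding I_def
      using x1 x2 x3 x4 x5 x6 x7 x8 x9 x10 x11 x12 x13 x14 x15
      by (elim disjE) (simp_all add: Int_commute)
  qed
  have "b ` {0..<4} \<subseteq> V" using b4 bV by auto
  moreover have "\<forall>i j k l. i < j \<and> j < 4 \<and> k < l \<and> l < 4 \<and> (i, j) \<noteq> (k, l) \<longrightarrow>
           inner_vertices (P i j) \<inter> inner_vertices (P k l) = {}"
  proof (intro allI impI)
    fix i j k l :: nat assume h: "i < j \<and> j < 4 \<and> k < l \<and> l < 4 \<and> (i, j) \<noteq> (k, l)"
    have "inner_vertices (P i j) \<subseteq> I i j" "inner_vertices (P k l) \<subseteq> I k l" using IP h by auto
    then show "inner_vertices (P i j) \<inter> inner_vertices (P k l) = {}" using disj[OF h] by blast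
  qed
  moreover have "\<forall>i j. i < j \<and> j < 4 \<longrightarrow>
           is_path V E (P i j) \<and> hd (P i j) = b i \<and> last (P i j) = b j \<and>
           inner_vertices (P i j) \<inter> b ` {0..<4} = {}" using path by blast
  ultimately show ?thesis unfolding has_K4_subdivision_def
    using inj by (intro exI[of _ b] exI[of _ P]) (intro conjI)
qed



locale SP =
  fixes V :: "'a set" and E :: "'a \<Rightarrow> 'a \<Rightarrow> bool" and s t :: 'a and C :: "'a set"
  assumes sp: "series_parallel V E" and nt: "no_transitive_edges V E"
    and sep: "separation_pair V E s t" and lc: "light_component V E s t C"
begin

lemma swap: "SP V E t s C"
proof -
  have "{t,s} = {s,t}" by auto
  then show ?thesis using sp nt sep lc unfolding SP_def separation_pair_def light_component_def
    by (metis (no_types, lifting))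
qed

lemma bic: "biconnected V E" using sp unfolding series_parallel_def by blast
lemma g: "graph V E" using bic unfolding biconnected_def by blast
lemma noK4: "\<not> has_K4_subdivision V E" using sp unfolding series_parallel_def by blast
lemma symE: "E x y \<Longrightarrow> E y x" using g unfolding graph_def by blast
lemma EV: "E x y \<Longrightarrow> x \<in> V \<and> y \<in> V \<and> x \<noteq> y" using g unfolding graph_def by blast
lemma st: "s \<in> V" "t \<in> V" "s \<noteq> t" using sep unfolding separation_pair_def by auto
lemma nst: "\<not> E s t" using sep nt unfolding no_transitive_edges_def by blast

lemma Csub: "C \<subseteq> V - {s,t}" and Cne: "C \<noteq> {}" and Cconn: "connected_in E C"
  and Cmax: "\<And>D. C \<subseteq> D \<Longrightarrow> D \<subseteq> V - {s,t} \<Longrightarrow> connected_in E D \<Longrightarrow> D = C"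
  using lc unfolding light_component_def conn_component_def by auto

lemma light: "w \<in> C \<Longrightarrow> E s w \<or> E t w"
  using lc unfolding light_component_def by blast

lemma Cclosed:
  assumes c: "c \<in> C" and e: "E c v" shows "v \<in> C \<or> v = s \<or> v = t"
proof (rule ccontr)
  assume nv: "\<not> (v \<in> C \<or> v = s \<or> v = t)"
  then have vS: "v \<in> V - {s,t}" using EV[OF e] by auto
  let ?D = "insert v C"
  have "connected_in E ?D"
    unfolding connected_in_wk
  proof (intro ballI)
    fix x y assume x: "x \<in> ?D" and y: "y \<in> ?D"
    have cw: "\<And>x y. x \<in> C \<Longrightarrow> y \<in> C \<Longrightarrow> wk E ?D x y"
      using Cconn unfolding connected_in_wk by (meson subset_insertI wk_mono)
    have vc: "wk E ?D v c" using wk_edge[of E v c ?D] symE[OF e] c by auto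
    have cv: "wk E ?D c v" using wk_edge[of E c v ?D] e c by auto
    show "wk E ?D x y"
    proof (cases "x = v")
      case True
      then show ?thesis
      proof (cases "y = v")
        case False then have "y \<in> C" using y by auto
        then show ?thesis using True vc cw[OF c] wk_trans by metis
      qed simp
    next
      case False then have xC: "x \<in> C" using x by auto
      show ?thesis
      proof (cases "y = v")
        case True then show ?thesis using cv cw[OF xC c] wk_trans by metis
      next
        case False then have "y \<in> C" using y by auto
        then show ?thesis using cw xC by blast
      qed
    qed
  qed
  then have "?D = C" using Cmax[of ?D] Csub vS by auto
  then show False using nv by auto
qed

lemma sepl:
  assumes "a \<in> V" "b \<in> V" "a \<noteq> b" "X \<subseteq> V - {a,b}" "x \<in> X" "y \<in> V - {a,b}" "y \<notin> X"
    and cl: "\<And>v u. v \<in> X \<Longrightarrow> E v u \<Longrightarrow> u \<in> X \<or> u = a \<or> u = b"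
  shows "\<not> E a b"
proof -
  have "\<not> connected_in E (V - {a,b})"
  proof
    assume "connected_in E (V - {a,b})"
    then have "wk E (V - {a,b}) x y" using assms unfolding connected_in_wk by blast
    then have "y \<in> X" by (rule wk_closed) (use assms cl in auto)
    then show False using assms by blast
  qed
  then have "separation_pair V E a b" using assms unfolding separation_pair_def by blast
  then show ?thesis using nt unfolding no_transitive_edges_def by blast
qed

lemma cutl:
  assumes "a \<in> V" "x \<in> X" "y \<in> V - {a}" "y \<notin> X"
    and cl: "\<And>v u. v \<in> X \<Longrightarrow> E v u \<Longrightarrow> u \<in> X \<or> u = a"
    and "X \<subseteq> V - {a}"
  shows False
proof -
  have "connected_in E (V - {a})" using bic assms unfolding biconnected_def by blast
  then have "wk E (V - {a}) x y" using assms unfolding connected_in_wk by blast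
  then have "y \<in> X" by (rule wk_closed) (use assms cl in auto)
  then show False using assms by blast
qed

lemma other: "\<exists>C'. C' \<subseteq> V - {s,t} \<and> C' \<inter> C = {} \<and> wk E (C' \<union> {s,t}) s t"
proof -
  define S where "S = V - {s,t}"
  have "\<not> connected_in E S" using sep unfolding separation_pair_def S_def by blast
  then have "S \<noteq> C" using Cconn by blast
  then obtain u where u: "u \<in> S" "u \<notin> C" using Csub S_def by blast
  define C' where "C' = {v. wk E S u v}"
  have C'S: "C' \<subseteq> S" using wk_in[of E S u] u unfolding C'_def by blast
  have uC': "u \<in> C'" unfolding C'_def by simp
  have C'cl: "\<And>v w. v \<in> C' \<Longrightarrow> w \<in> S \<Longrightarrow> E v w \<Longrightarrow> w \<in> C'"
  proof -
    fix v w assume h: "v \<in> C'" "w \<in> S" "E v w"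
    then have "v \<in> S" using C'S by blast
    then have "wk E S v w" using wk_edge[of E v w S] h by blast
    then show "w \<in> C'" using h(1) wk_trans[of E S u v w] unfolding C'_def by blast
  qed
  have disj: "C' \<inter> C = {}"
  proof (rule ccontr)
    assume "C' \<inter> C \<noteq> {}"
    then obtain v where v: "v \<in> C'" "v \<in> C" by blast
    then have "wk E S u v" unfolding C'_def by blast
    then have "wk E S v u" using wk_sym[of E] symE by metis
    then have "u \<in> C" by (rule wk_closed) (use v Cclosed S_def in auto)
    then show False using u by blast
  qed
  have nbr: "\<exists>v\<in>C'. E v a" if a: "a = s \<or> a = t" for a
  proof (rule ccontr)
    assume na: "\<not> (\<exists>v\<in>C'. E v a)"
    define b where "b = (if a = s then t else s)"
    have ab: "a = s \<and> b = t \<or> a = t \<and> b = s" "a \<noteq> b" "b \<in> V" using st a b_def by auto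
    show False
    proof (rule cutl[of b u C' a])
      show "b \<in> V" using ab by simp
      show "u \<in> C'" by (rule uC')
      show "a \<in> V - {b}" using ab st a by auto
      show "a \<notin> C'" using C'S a S_def by auto
      show "C' \<subseteq> V - {b}" using C'S S_def ab by auto
      fix v w assume "v \<in> C'" "E v w"
      then have "w \<noteq> a" using na by blast
      then show "w \<in> C' \<or> w = b" using C'cl[of v w] \<open>v \<in> C'\<close> \<open>E v w\<close> EV[of v w] S_def ab by auto
    qed
  qed
  obtain v1 where v1: "v1 \<in> C'" "E v1 s" using nbr[of s] by blast
  obtain v2 where v2: "v2 \<in> C'" "E v2 t" using nbr[of t] by blast
  have reach: "\<And>v. v \<in> C' \<Longrightarrow> wk E C' u v" unfolding C'_def using wk_reach[of E S u] by simp
  have "wk E C' v1 u" using wk_sym[of E C' u v1, OF symE reach[OF v1(1)]] by simp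
  then have "wk E C' v1 v2" using reach[OF v2(1)] wk_trans[of E C' v1 u v2] by simp
  then have m: "wk E (C' \<union> {s,t}) v1 v2" by (rule wk_mono) auto
  have e1: "wk E (C' \<union> {s,t}) s v1" using wk_edge[of E s v1 "C' \<union> {s,t}"] symE[OF v1(2)] v1(1) by simp
  have e2: "wk E (C' \<union> {s,t}) v2 t" using wk_edge[of E v2 t "C' \<union> {s,t}"] v2 by simp
  have "wk E (C' \<union> {s,t}) s t" using wk_trans[OF wk_trans[OF e1 m] e2] .
  then show ?thesis using C'S disj S_def by blast
qed


lemma step1:
  assumes w: "w \<in> C" "E s w" "E t w" and d: "d \<in> C" "E w d" "E s d" "\<not> E t d"
  shows False
proof -
  obtain C' where C': "C' \<subseteq> V - {s,t}" "C' \<inter> C = {}" "wk E (C' \<union> {s,t}) s t" using other by blast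
  define T where "T = C - {w} - {v. E t v}"
  define Q where "Q = {v. wk E T d v}"
  have dT: "d \<in> T" using d EV[of w d] unfolding T_def by auto
  have QT: "Q \<subseteq> T"
  proof
    fix v assume "v \<in> Q"
    then have "wk E T d v" unfolding Q_def by simp
    then show "v \<in> T" using wk_in dT by metis
  qed
  have dQ: "d \<in> Q" unfolding Q_def by simp
  have Qw: "\<And>q. q \<in> Q \<Longrightarrow> wk E Q d q" unfolding Q_def using wk_reach[of E T d] by simp
  have wV: "w \<in> V" "w \<noteq> s" "w \<noteq> t" using w Csub by auto
  show False
  proof (cases "\<exists>q\<in>Q. \<exists>y\<in>C - {w}. E q y \<and> E t y")
    case True
    then obtain q y where q: "q \<in> Q" "y \<in> C" "y \<noteq> w" "E q y" "E t y" by blast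
    have qT: "q \<in> C" "q \<noteq> w" "\<not> E t q" using q(1) QT T_def by auto
    have Esq: "E s q" using light[OF qT(1)] qT(3) by blast
    have w02: "wk E {s,w} s w" by (rule wk_edge) (use w in auto)
    have w03: "wk E {s,q} s q" by (rule wk_edge) (use Esq in auto)
    have w12: "wk E {t,w} t w" by (rule wk_edge) (use w in auto)
    have w13a: "wk E {t,y,q} t y" by (rule wk_edge) (use q in auto)
    have w13b: "wk E {t,y,q} y q" by (rule wk_edge) (use q symE in auto)
    have w13: "wk E {t,y,q} t q" using wk_trans[OF w13a w13b] .
    have w23a: "wk E (insert w Q) w d" by (rule wk_edge) (use d dQ in auto)
    have w23b: "wk E (insert w Q) d q" by (rule wk_mono[OF Qw[OF q(1)]]) auto
    have w23: "wk E (insert w Q) w q" using wk_trans[OF w23a w23b] .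
    have yQ: "y \<notin> Q" using QT q(5) T_def by auto
    have "has_K4_subdivision V E"
      by (rule K4I[OF g _ C'(3) w02 w03 w12 w13 w23])
         (use C' Csub st w wV q qT QT T_def yQ in auto)
    then show False using noK4 by blast
  next
    case False
    have "\<not> E s w"
    proof (rule sepl[of s w Q d t])
      show "s \<in> V" "w \<in> V" "s \<noteq> w" using st wV by auto
      show "Q \<subseteq> V - {s, w}" using QT T_def Csub by auto
      show "d \<in> Q" by (rule dQ)
      show "t \<in> V - {s, w}" using st wV by auto
      show "t \<notin> Q" using QT T_def Csub by auto
      fix v u assume v: "v \<in> Q" "E v u"
      have vC: "v \<in> C" "\<not> E t v" using v QT T_def by auto
      have "u \<in> C \<or> u = s \<or> u = t" using Cclosed[OF vC(1) v(2)] .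
      moreover have "u \<noteq> t" using vC(2) symE v(2) by blast
      moreover
      { assume uC: "u \<in> C" "u \<noteq> w"
        then have "\<not> E t u" using False v by blast
        then have uT: "u \<in> T" using uC T_def by auto
        have "wk E T d v" using v Q_def by simp
        moreover have "wk E T v u" by (rule wk_edge) (use v uT QT in auto)
        ultimately have "u \<in> Q" unfolding Q_def using wk_trans by fastforce }
      ultimately show "u \<in> Q \<or> u = s \<or> u = w" by blast
    qed
    then show False using w by blast
  qed
qed


lemma indep:
  assumes dj: "\<forall>w\<in>C. \<not> (E s w \<and> E t w)" and x: "x \<in> C" "E s x" and y: "y \<in> C" "E s y"
    and xy: "E x y"
  shows False
proof -
  obtain C' where C': "C' \<subseteq> V - {s,t}" "C' \<inter> C = {}" "wk E (C' \<union> {s,t}) s t" using other by blast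
  define Vs where "Vs = {w\<in>C. E s w}"
  define Q where "Q = {v. wk E Vs x v}"
  have xVs: "x \<in> Vs" using x Vs_def by simp
  have QVs: "Q \<subseteq> Vs"
  proof
    fix v assume "v \<in> Q"
    then have "wk E Vs x v" unfolding Q_def by simp
    then show "v \<in> Vs" using wk_in xVs by metis
  qed
  have xQ: "x \<in> Q" unfolding Q_def by simp
  have yQ: "y \<in> Q" unfolding Q_def by (simp, rule wk_edge) (use xy x y Vs_def in auto)
  have Qw: "\<And>q. q \<in> Q \<Longrightarrow> wk E Q x q" unfolding Q_def using wk_reach[of E Vs x] by simp
  have Qcl: "\<And>v u. v \<in> Q \<Longrightarrow> u \<in> Vs \<Longrightarrow> E v u \<Longrightarrow> u \<in> Q"
  proof -
    fix v u assume h: "v \<in> Q" "u \<in> Vs" "E v u"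
    have "wk E Vs x v" using h Q_def by simp
    moreover have "wk E Vs v u" by (rule wk_edge) (use h QVs in auto)
    ultimately show "u \<in> Q" unfolding Q_def using wk_trans by fastforce
  qed
  have Qpath: "\<And>a b. a \<in> Q \<Longrightarrow> b \<in> Q \<Longrightarrow> wk E Q a b"
  proof -
    fix a b assume "a \<in> Q" "b \<in> Q"
    have "wk E Q a x" using wk_sym[of E Q x a, OF symE Qw[OF \<open>a \<in> Q\<close>]] by simp
    then show "wk E Q a b" using wk_trans Qw[OF \<open>b \<in> Q\<close>] by metis
  qed
  have QC: "\<And>v. v \<in> Q \<Longrightarrow> v \<in> C \<and> E s v \<and> \<not> E t v" using QVs Vs_def dj by auto
  show False
  proof (cases "\<exists>q\<in>Q. \<forall>q'\<in>Q. \<forall>z\<in>C. E t z \<and> E q' z \<longrightarrow> q' = q")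
    case True
    then obtain q where q: "q \<in> Q" "\<forall>q'\<in>Q. \<forall>z\<in>C. E t z \<and> E q' z \<longrightarrow> q' = q" by blast
    define x' where "x' = (if q = x then y else x)"
    have "x \<noteq> y" using EV xy by blast
    then have x'Q: "x' \<in> Q" "x' \<noteq> q" using xQ yQ x'_def by auto
    have qC: "q \<in> C" "E s q" using QC q(1) by auto
    have "\<not> E s q"
    proof (rule sepl[of s q "Q - {q}" x' t])
      show "s \<in> V" "q \<in> V" "s \<noteq> q" using st qC Csub by auto
      show "Q - {q} \<subseteq> V - {s, q}" using QC Csub by blast
      show "x' \<in> Q - {q}" using x'Q by simp
      show "t \<in> V - {s, q}" using st qC Csub by auto
      show "t \<notin> Q - {q}" using QC Csub by blast
      fix v u assume v: "v \<in> Q - {q}" "E v u"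
      have vC: "v \<in> C" "E s v" "\<not> E t v" using QC v by auto
      have "u \<in> C \<or> u = s \<or> u = t" using Cclosed[OF vC(1) v(2)] .
      moreover have "u \<noteq> t" using vC(3) symE v(2) by blast
      moreover
      { assume uC: "u \<in> C"
        have "\<not> E t u" using q(2) v uC by blast
        then have "E s u" using light[OF uC] by blast
        then have "u \<in> Q" using Qcl[of v u] v uC Vs_def by auto }
      ultimately show "u \<in> Q - {q} \<or> u = s \<or> u = q" by blast
    qed
    then show False using qC by blast
  next
    case False
    then have nq: "\<And>q. q \<in> Q \<Longrightarrow> \<exists>q'\<in>Q. \<exists>z\<in>C. E t z \<and> E q' z \<and> q' \<noteq> q" by blast
    obtain q1 z1 where q1: "q1 \<in> Q" "z1 \<in> C" "E t z1" "E q1 z1" using nq[OF xQ] by blast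
    obtain q2 z2 where q2: "q2 \<in> Q" "z2 \<in> C" "E t z2" "E q2 z2" "q2 \<noteq> q1" using nq[OF q1(1)] by blast
    have qq: "q1 \<in> C" "E s q1" "\<not> E t q1" "q2 \<in> C" "E s q2" "\<not> E t q2" using QC q1 q2 by auto
    have zz: "\<not> E s z1" "\<not> E s z2" using dj q1 q2 by auto
    have zQ: "z1 \<notin> Q" "z2 \<notin> Q" using QC zz by auto
    have wQ: "wk E Q q1 q2" using Qpath q1 q2 by blast
    show False
    proof (cases "z1 = z2")
      case False
      have w02: "wk E {s,q1} s q1" by (rule wk_edge) (use qq in auto)
      have w03: "wk E {s,q2} s q2" by (rule wk_edge) (use qq in auto)
      have w12: "wk E {t,z1,q1} t q1"
        using wk_trans[OF wk_edge[of E t z1] wk_edge[of E z1 q1]] q1 symE by auto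
      have w13: "wk E {t,z2,q2} t q2"
        using wk_trans[OF wk_edge[of E t z2] wk_edge[of E z2 q2]] q2 symE by auto
      have "has_K4_subdivision V E"
        by (rule K4I[OF g _ C'(3) w02 w03 w12 w13 wQ])
           (use C' Csub st q1 q2 qq zz zQ QC False in auto)
      then show False using noK4 by blast
    next
      case True
      have w01: "wk E {s,q1} s q1" by (rule wk_edge) (use qq in auto)
      have w02: "wk E {s,q2} s q2" by (rule wk_edge) (use qq in auto)
      have w03a: "wk E (insert z1 (C' \<union> {s,t})) s t" by (rule wk_mono[OF C'(3)]) auto
      have w03: "wk E (insert z1 (C' \<union> {s,t})) s z1"
        using wk_trans[OF w03a wk_edge[of E t z1]] q1 by auto
      have w13: "wk E {q1,z1} q1 z1" by (rule wk_edge) (use q1 in auto)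
      have w23: "wk E {q2,z1} q2 z1" by (rule wk_edge) (use q2 True in auto)
      have "has_K4_subdivision V E"
        by (rule K4I[OF g _ w01 w02 w03 wQ w13 w23])
           (use C' Csub st q1 q2 qq zz zQ QC True in auto)
      then show False using noK4 by blast
    qed
  qed
qed


lemma P4:
  assumes C: "a \<in> C" "b \<in> C" "c \<in> C" "d \<in> C" and e: "E s a" "E s b" "E t c" "E t d"
    and n: "\<not> E t a" "\<not> E t b" "\<not> E s c" "\<not> E s d" and p: "E a c" "E c b" "E b d"
    and ne: "a \<noteq> b" "c \<noteq> d"
  shows False
proof -
  obtain C' where C': "C' \<subseteq> V - {s,t}" "C' \<inter> C = {}" "wk E (C' \<union> {s,t}) s t" using other by blast
  have w02: "wk E {s,b} s b" by (rule wk_edge) (use e in auto)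
  have w03: "wk E {s,a,c} s c"
    using wk_trans[OF wk_edge[of E s a] wk_edge[of E a c]] e p by auto
  have w12: "wk E {t,d,b} t b"
    using wk_trans[OF wk_edge[of E t d] wk_edge[of E d b]] e p symE by auto
  have w13: "wk E {t,c} t c" by (rule wk_edge) (use e in auto)
  have w23: "wk E {b,c} b c" by (rule wk_edge) (use p symE in auto)
  have "a \<noteq> c" "b \<noteq> c" "a \<noteq> d" "b \<noteq> d" using e n by auto
  then have "has_K4_subdivision V E"
    by (rule_tac K4I[OF g _ C'(3) w02 w03 w12 w13 w23])
       (use C' Csub st C ne in auto)
  then show False using noK4 by blast
qed

lemma first_step: "wk E T a b \<Longrightarrow> a \<noteq> b \<Longrightarrow> \<exists>d. E a d \<and> d \<in> T"
  unfolding wk_def by (erule converse_rtranclpE) auto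

lemma dj: assumes "card C > 1" shows "\<forall>w\<in>C. \<not> (E s w \<and> E t w)"
proof (intro ballI notI)
  fix w assume w: "w \<in> C" "E s w \<and> E t w"
  have "C - {w} \<noteq> {}"
  proof
    assume "C - {w} = {}"
    then have "C = {w}" using w by auto
    then show False using assms by simp
  qed
  then obtain y where y: "y \<in> C" "y \<noteq> w" by blast
  have "wk E C w y" using Cconn w y unfolding connected_in_wk by blast
  then obtain d where d: "E w d" "d \<in> C" using first_step[of C w y] y(2) by auto
  show False
  proof (cases "E s d")
    case sd: True
    show False
    proof (cases "E t d")
      case True
      obtain C' where C': "C' \<subseteq> V - {s,t}" "C' \<inter> C = {}" "wk E (C' \<union> {s,t}) s t" using other by blast
      have w02: "wk E {s,w} s w" by (rule wk_edge) (use w in auto)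
      have w03: "wk E {s,d} s d" by (rule wk_edge) (use sd in auto)
      have w12: "wk E {t,w} t w" by (rule wk_edge) (use w in auto)
      have w13: "wk E {t,d} t d" by (rule wk_edge) (use True in auto)
      have w23: "wk E {w,d} w d" by (rule wk_edge) (use d in auto)
      have "w \<noteq> d" using d EV by blast
      then have "has_K4_subdivision V E"
        by (rule_tac K4I[OF g _ C'(3) w02 w03 w12 w13 w23])
           (use C' Csub st w d in auto)
      then show False using noK4 by blast
    next
      case False
      then show False using step1[of w d] w d sd by simp
    qed
  next
    case False
    then have "E t d" using light d by blast
    then show False using SP.step1[OF swap, of w d] w d False by simp
  qed
qed

lemma indS: assumes "card C > 1" shows "independent E {w\<in>C. E s w}"
  unfolding independent_def using indep[OF dj[OF assms]] by blast

lemma Vne: "{w\<in>C. E s w} \<noteq> {}"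
proof
  assume h: "{w\<in>C. E s w} = {}"
  obtain w where w: "w \<in> C" using Cne by blast
  show False
  proof (rule cutl[of t w C s])
    show "t \<in> V" "w \<in> C" "s \<in> V - {t}" "s \<notin> C" "C \<subseteq> V - {t}" using st w Csub by auto
    fix v u assume "v \<in> C" "E v u"
    then show "u \<in> C \<or> u = t" using Cclosed h symE by blast
  qed
qed

lemma fin: "finite C" using g Csub unfolding graph_def by (meson finite_Diff finite_subset)

lemma form2:
  assumes c: "card C > 1" and one: "card {w\<in>C. E t w} = 1"
  shows "\<exists>t' Vs. C = insert t' Vs \<and> t' \<notin> Vs \<and> Vs \<noteq> {} \<and> independent E Vs \<and>
            E t' t \<and> \<not> E t' s \<and>
            (\<forall>v\<in>Vs. E v s \<and> E v t' \<and> \<not> E v t \<and> (\<forall>u. E v u \<longrightarrow> u = s \<or> u = t'))"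
proof -
  define Vs where "Vs = {w\<in>C. E s w}"
  obtain t' where t': "{w\<in>C. E t w} = {t'}" using one card_1_singletonE by blast
  have djc: "\<forall>w\<in>C. \<not> (E s w \<and> E t w)" using dj[OF c] .
  have iS: "independent E Vs" using indS[OF c] Vs_def by simp
  have t'C: "t' \<in> C" "E t t'" using t' by auto
  have CC: "C = insert t' Vs" using t' light Vs_def by auto
  have t'n: "t' \<notin> Vs" using djc t'C Vs_def by auto
  have Vsne: "Vs \<noteq> {}" using Vne Vs_def by simp
  have nb: "\<And>v u. v \<in> Vs \<Longrightarrow> E v u \<Longrightarrow> u = s \<or> u = t'"
  proof -
    fix v u assume v: "v \<in> Vs" "E v u"
    have vC: "v \<in> C" "E s v" "\<not> E t v" using v Vs_def djc by auto
    have "u \<in> C \<or> u = s \<or> u = t" using Cclosed[OF vC(1) v(2)] .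
    moreover have "u \<noteq> t" using vC symE v by blast
    moreover have "u \<notin> Vs" using iS v unfolding independent_def by blast
    ultimately show "u = s \<or> u = t'" using CC by blast
  qed
  have vt': "\<And>v. v \<in> Vs \<Longrightarrow> E v t'"
  proof (rule ccontr)
    fix v assume v: "v \<in> Vs" "\<not> E v t'"
    show False
    proof (rule cutl[of s v "{v}" t])
      show "s \<in> V" "v \<in> {v}" "t \<in> V - {s}" "t \<notin> {v}" "{v} \<subseteq> V - {s}" using st v Vs_def Csub by auto
      fix w u assume "w \<in> {v}" "E w u"
      then show "u \<in> {v} \<or> u = s" using nb[of v u] v by auto
    qed
  qed
  show ?thesis
    apply (rule exI[of _ t'], rule exI[of _ Vs])
    using CC t'n Vsne iS t'C symE djc nb vt' Vs_def by auto
qed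

lemma main:
  shows "((\<exists>w. C = {w} \<and> E s w \<and> E w t)
      \<or> (\<exists>t' Vs. C = insert t' Vs \<and> t' \<notin> Vs \<and> Vs \<noteq> {} \<and> independent E Vs \<and>
            E t' t \<and> \<not> E t' s \<and>
            (\<forall>v\<in>Vs. E v s \<and> E v t' \<and> \<not> E v t \<and> (\<forall>u. E v u \<longrightarrow> u = s \<or> u = t')))
      \<or> (\<exists>s' Vt. C = insert s' Vt \<and> s' \<notin> Vt \<and> Vt \<noteq> {} \<and> independent E Vt \<and>
            E s' s \<and> \<not> E s' t \<and>
            (\<forall>v\<in>Vt. E v t \<and> E v s' \<and> \<not> E v s \<and> (\<forall>u. E v u \<longrightarrow> u = t \<or> u = s'))))
    \<and> (card C > 1 \<longrightarrow>
         (let Vs = {w\<in>C. E s w}; Vt = {w\<in>C. E t w} in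
            Vs \<inter> Vt = {} \<and> independent E Vs \<and> independent E Vt \<and> Vs \<union> Vt = C \<and>
            (card Vs = 1 \<or> card Vt = 1)))"
proof (cases "card C > 1")
  case False
  moreover have "card C > 0" using Cne fin by (simp add: card_gt_0_iff)
  ultimately have "card C = 1" by linarith
  then obtain w where w: "C = {w}" using card_1_singletonE by blast
  have nbw: "\<And>u. E w u \<Longrightarrow> u = s \<or> u = t" using Cclosed w EV by blast
  have ws: "E s w"
  proof (rule ccontr)
    assume n: "\<not> E s w"
    show False
    proof (rule cutl[of t w "{w}" s])
      show "t \<in> V" "w \<in> {w}" "s \<in> V - {t}" "s \<notin> {w}" "{w} \<subseteq> V - {t}" using st w Csub by auto
      fix v u assume "v \<in> {w}" "E v u"
      then show "u \<in> {w} \<or> u = t" using nbw n symE by blast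
    qed
  qed
  have wt: "E t w"
  proof (rule ccontr)
    assume n: "\<not> E t w"
    show False
    proof (rule cutl[of s w "{w}" t])
      show "s \<in> V" "w \<in> {w}" "t \<in> V - {s}" "t \<notin> {w}" "{w} \<subseteq> V - {s}" using st w Csub by auto
      fix v u assume "v \<in> {w}" "E v u"
      then show "u \<in> {w} \<or> u = s" using nbw n symE by blast
    qed
  qed
  have ex: "\<exists>w'. C = {w'} \<and> E s w' \<and> E w' t" using w ws symE[OF wt] by blast
  show ?thesis
    apply (rule conjI)
     apply (rule disjI1[OF ex])
    using False by simp
next
  case True
  define Vs where "Vs = {w\<in>C. E s w}"
  define Vt where "Vt = {w\<in>C. E t w}"
  have djc: "\<forall>w\<in>C. \<not> (E s w \<and> E t w)" using dj[OF True] .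
  have iS: "independent E Vs" using indS[OF True] Vs_def by simp
  have iT: "independent E Vt" using SP.indS[OF swap True] Vt_def by simp
  have un: "Vs \<union> Vt = C" using light Vs_def Vt_def by auto
  have int: "Vs \<inter> Vt = {}" using djc Vs_def Vt_def by auto
  have sne: "Vs \<noteq> {}" using Vne Vs_def by simp
  have tne: "Vt \<noteq> {}" using SP.Vne[OF swap] Vt_def by simp
  have finS: "finite Vs" "finite Vt" using fin Vs_def Vt_def by auto
  have star: "\<And>a. a \<in> C \<Longrightarrow> (\<forall>c\<in>C. E a c \<longrightarrow> (\<forall>b\<in>C. E c b \<longrightarrow> b = a)) \<Longrightarrow> C \<subseteq> insert a {c\<in>C. E a c}"
  proof
    fix a v assume a: "a \<in> C" and h: "\<forall>c\<in>C. E a c \<longrightarrow> (\<forall>b\<in>C. E c b \<longrightarrow> b = a)" and v: "v \<in> C"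
    have "wk E C a v" using Cconn a v unfolding connected_in_wk by blast
    then show "v \<in> insert a {c\<in>C. E a c}"
      by (rule wk_closed) (use h in auto)
  qed
  have card1: "card Vs = 1 \<or> card Vt = 1"
  proof (rule ccontr)
    assume n: "\<not> (card Vs = 1 \<or> card Vt = 1)"
    obtain a where a: "a \<in> Vs" using sne by blast
    have aC: "a \<in> C" using a Vs_def by simp
    obtain c b where cb: "c \<in> C" "E a c" "b \<in> C" "E c b" "b \<noteq> a"
    proof (rule ccontr)
      assume "\<not> thesis"
      then have "C \<subseteq> insert a {c\<in>C. E a c}" using star[OF aC] that by blast
      moreover have "{c\<in>C. E a c} \<inter> Vs = {}" using iS a unfolding independent_def by blast
      ultimately have "Vs \<subseteq> {a}" using un by blast
      then have "Vs = {a}" using a by blast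
      then show False using n by simp
    qed
    have cT: "c \<in> Vt" using cb iS a un unfolding independent_def by blast
    have bS: "b \<in> Vs" using cb iT cT un unfolding independent_def by blast
    obtain b' d where bd: "b' \<in> C" "E c b'" "d \<in> C" "E b' d" "d \<noteq> c"
    proof (rule ccontr)
      assume "\<not> thesis"
      then have "C \<subseteq> insert c {x\<in>C. E c x}" using star[OF cb(1)] that by blast
      moreover have "{x\<in>C. E c x} \<inter> Vt = {}" using iT cT unfolding independent_def by blast
      ultimately have "Vt \<subseteq> {c}" using un by blast
      then have "Vt = {c}" using cT by blast
      then show False using n by simp
    qed
    have b'S: "b' \<in> Vs" using bd iT cT un unfolding independent_def by blast
    have dT: "d \<in> Vt" using bd iS b'S un unfolding independent_def by blast
    have facts: "\<And>x. x \<in> Vs \<Longrightarrow> x \<in> C \<and> E s x \<and> \<not> E t x" "\<And>x. x \<in> Vt \<Longrightarrow> x \<in> C \<and> E t x \<and> \<not> E s x"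
      using Vs_def Vt_def djc by auto
    show False
    proof (cases "b' = a")
      case False
      show False by (rule P4[of a b' c d]) (use facts(1)[OF a] facts(1)[OF b'S] facts(2)[OF cT] facts(2)[OF dT] cb bd False in auto)
    next
      case True
      show False by (rule P4[of b a c d]) (use facts(1)[OF a] facts(1)[OF bS] facts(2)[OF cT] facts(2)[OF dT] cb bd True symE in auto)
    qed
  qed
  have first: "(\<exists>t' Vs. C = insert t' Vs \<and> t' \<notin> Vs \<and> Vs \<noteq> {} \<and> independent E Vs \<and>
            E t' t \<and> \<not> E t' s \<and>
            (\<forall>v\<in>Vs. E v s \<and> E v t' \<and> \<not> E v t \<and> (\<forall>u. E v u \<longrightarrow> u = s \<or> u = t')))
      \<or> (\<exists>s' Vt. C = insert s' Vt \<and> s' \<notin> Vt \<and> Vt \<noteq> {} \<and> independent E Vt \<and>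
            E s' s \<and> \<not> E s' t \<and>
            (\<forall>v\<in>Vt. E v t \<and> E v s' \<and> \<not> E v s \<and> (\<forall>u. E v u \<longrightarrow> u = t \<or> u = s')))"
  proof (cases "card Vt = 1")
    case True
    then show ?thesis using form2[OF \<open>1 < card C\<close>] Vt_def by (intro disjI1) simp
  next
    case False
    then have "card {w\<in>C. E s w} = 1" using card1 Vs_def by simp
    then show ?thesis by (intro disjI2) (rule SP.form2[OF swap \<open>1 < card C\<close>])
  qed
  have all: "Vs \<inter> Vt = {} \<and> independent E Vs \<and> independent E Vt \<and> Vs \<union> Vt = C \<and> (card Vs = 1 \<or> card Vt = 1)"
    using iS iT un int card1 by (intro conjI)
  show ?thesis
    apply (rule conjI)
     apply (rule disjI2[OF first])
    unfolding Let_def using all unfolding Vs_def Vt_def by (intro impI)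
qed

end

theorem claim6:
  fixes V :: "'a set" and E :: "'a \<Rightarrow> 'a \<Rightarrow> bool" and s t :: 'a and C :: "'a set"
  assumes "series_parallel V E"
    and "no_transitive_edges V E"
    and "separation_pair V E s t"
    and "light_component V E s t C"
  shows "((\<exists>w. C = {w} \<and> E s w \<and> E w t)
      \<or> (\<exists>t' Vs. C = insert t' Vs \<and> t' \<notin> Vs \<and> Vs \<noteq> {} \<and> independent E Vs \<and>
            E t' t \<and> \<not> E t' s \<and>
            (\<forall>v\<in>Vs. E v s \<and> E v t' \<and> \<not> E v t \<and> (\<forall>u. E v u \<longrightarrow> u = s \<or> u = t')))
      \<or> (\<exists>s' Vt. C = insert s' Vt \<and> s' \<notin> Vt \<and> Vt \<noteq> {} \<and> independent E Vt \<and>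
            E s' s \<and> \<not> E s' t \<and>
            (\<forall>v\<in>Vt. E v t \<and> E v s' \<and> \<not> E v s \<and> (\<forall>u. E v u \<longrightarrow> u = t \<or> u = s'))))
    \<and> (card C > 1 \<longrightarrow>
         (let Vs = {w\<in>C. E s w}; Vt = {w\<in>C. E t w} in
            Vs \<inter> Vt = {} \<and> independent E Vs \<and> independent E Vt \<and> Vs \<union> Vt = C \<and>
            (card Vs = 1 \<or> card Vt = 1)))"
proof -
  interpret SP V E s t C using assms by unfold_locales
  show ?thesis by (rule main)
qed

end
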